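(* There exists $\varepsilon_0>0$ such that for every $\varepsilon\in(0,\varepsilon_0)$ the following holds. Let $\mathbf{U}$ be the $7\times 7$ matrix $$\mathbf{U}=\begin{pmatrix} 0 & -1 & \varepsilon & -10 & -\tfrac13+\varepsilon & -\tfrac13+\varepsilon & -\tfrac13+\varepsilon\\ \varepsilon & 0 & -1 & -10 & -\tfrac13+\varepsilon & -\tfrac13+\varepsilon & -\tfrac13+\varepsilon\\ -1 & \varepsilon & 0 & -10 & -\tfrac13+\varepsilon & -\tfrac13+\varepsilon & -\tfrac13+\varepsilon\\ -2 & -2 & 2 & 0 & -\tfrac13 & -\tfrac13 & -\tfrac13\\ -\tfrac13 & -\tfrac13 & -\tfrac13 & 10 & 0 & -1 & \varepsilon\\ -\tfrac13 & -\tfrac13 & -\tfrac13 & 10 & \varepsilon & 0 & -1\\ -\tfrac13 & -\tfrac13 & -\tfrac13 & 10 & -1 & \varepsilon & 0 \end{pmatrix},\qquad \bar{\mathbf{U}}=\begin{pmatrix} 0 & -1 & \varepsilon\\ \varepsilon & 0 & -1\\ -1 & \varepsilon & 0\end{pmatrix}.$$ Let $\mathbf{x}(\cdot):\mathbb{R}\to S_7$ be an interior solution (i.e. $x_i(t)>0$ for all $i$ and all $t\in\mathbb{R}$) of the replicator dynamics $\dot x_i=x_i[(\mathbf{U}\mathbf{x})_i-\mathbf{x}\cdot\mathbf{U}\mathbf{x}]$. Set $\lambda(t)=x_1(t)+x_2(t)+x_3(t)$, $\bar x_i=x_i/\lambda$ for $i=1,2,3$, $\bar{\mathbf{x}}=(\bar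 x_1,\bar x_2,\bar x_3)$ and $\bar\tau(t)=\int_0^t\lambda(s)\,ds$. Let $\mathbf{y}(\cdot)$ be the solution of the replicator dynamics $\dot y_i=y_i[(\bar{\mathbf{U}}\mathbf{y})_i-\mathbf{y}\cdot\bar{\mathbf{U}}\mathbf{y}]$ on $S_3$ with $\mathbf{y}(0)=\bar{\mathbf{x}}(0)$. Then $$\dot{\bar x}_i=\lambda\,\bar x_i\big[(\bar{\mathbf{U}}\bar{\mathbf{x}})_i-\bar{\mathbf{x}}\cdot\bar{\mathbf{U}}\bar{\mathbf{x}}\big]\quad (i=1,2,3),$$ and $\bar{\mathbf{x}}(t)=\mathbf{y}(\bar\tau(t))$ for all $t\in\mathbb{R}$.
   Context: $S_n=\{\mathbf{x}\in\mathbb{R}_+^n:\sum_i x_i=1\}$. The paper assumes throughout that $\varepsilon>0$ is "small enough". *)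

theory Defs
  imports "HOL-Analysis.Analysis"
begin

text \<open>Vectors in R^n are rendered as functions nat => real, using the indices 1..n.\<close>

definition in_simplex :: "nat \<Rightarrow> (nat \<Rightarrow> real) \<Rightarrow> bool" where
  "in_simplex n v \<longleftrightarrow> (\<forall>i\<in>{1..n}. 0 \<le> v i) \<and> (\<Sum>i=1..n. v i) = 1"

definition matvec :: "nat \<Rightarrow> (nat \<Rightarrow> nat \<Rightarrow> real) \<Rightarrow> (nat \<Rightarrow> real) \<Rightarrow> nat \<Rightarrow> real" where
  "matvec n A v i = (\<Sum>j=1..n. A i j * v j)"

definition dotp :: "nat \<Rightarrow> (nat \<Rightarrow> real) \<Rightarrow> (nat \<Rightarrow> real) \<Rightarrow> real" where
  "dotp n v w = (\<Sum>i=1..n. v i * w i)"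

definition replicator_solution :: "nat \<Rightarrow> (nat \<Rightarrow> nat \<Rightarrow> real) \<Rightarrow> (real \<Rightarrow> nat \<Rightarrow> real) \<Rightarrow> bool" where
  "replicator_solution n A x \<longleftrightarrow>
     (\<forall>t. \<forall>i\<in>{1..n}. ((\<lambda>s. x s i) has_real_derivative
        x t i * (matvec n A (x t) i - dotp n (x t) (matvec n A (x t)))) (at t))"

definition Umat :: "real \<Rightarrow> nat \<Rightarrow> nat \<Rightarrow> real" where
  "Umat e i j =
    [[0, -1, e, -10, -1/3+e, -1/3+e, -1/3+e],
     [e, 0, -1, -10, -1/3+e, -1/3+e, -1/3+e],
     [-1, e, 0, -10, -1/3+e, -1/3+e, -1/3+e],
     [-2, -2, 2, 0, -1/3, -1/3, -1/3],
     [-1/3, -1/3, -1/3, 10, 0, -1, e],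
     [-1/3, -1/3, -1/3, 10, e, 0, -1],
     [-1/3, -1/3, -1/3, 10, -1, e, 0]] ! (i - 1) ! (j - 1)"

definition Ubar :: "real \<Rightarrow> nat \<Rightarrow> nat \<Rightarrow> real" where
  "Ubar e i j = [[0, -1, e], [e, 0, -1], [-1, e, 0]] ! (i - 1) ! (j - 1)"

definition lam :: "(real \<Rightarrow> nat \<Rightarrow> real) \<Rightarrow> real \<Rightarrow> real" where
  "lam x t = x t 1 + x t 2 + x t 3"

definition xbar :: "(real \<Rightarrow> nat \<Rightarrow> real) \<Rightarrow> real \<Rightarrow> nat \<Rightarrow> real" where
  "xbar x t i = x t i / lam x t"

text \<open>Signed integral from 0 to t (negative orientation for t < 0).\<close>
definition taubar :: "(real \<Rightarrow> nat \<Rightarrow> real) \<Rightarrow> real \<Rightarrow> real" where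
  "taubar x t = (LBINT s=0..t. lam x s)"

end

theory Submission imports Defs begin

lemma gronwall_zero:
  fixes w w' :: "real \<Rightarrow> real" and L :: real
  assumes d: "\<And>t. (w has_real_derivative w' t) (at t)"
    and b: "\<And>t. \<bar>w' t\<bar> \<le> L * w t" and nn: "\<And>t. 0 \<le> w t" and z: "w 0 = 0"
  shows "w t = 0"
proof (cases "0 \<le> t")
  case True
  have "(\<lambda>s. w s * exp (- L * s)) t \<le> (\<lambda>s. w s * exp (- L * s)) 0"
  proof (rule DERIV_nonpos_imp_nonincreasing[OF True])
    fix s
    have "((\<lambda>s. w s * exp (- L * s)) has_real_derivative
        w' s * exp (- L * s) + w s * (exp (- L * s) * (- L))) (at s)"
      by (auto intro!: derivative_eq_intros d)
    moreover have "w' s * exp (- L * s) + w s * (exp (- L * s) * (- L)) \<le> 0"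
    proof -
      have "w' s - L * w s \<le> 0" using b[of s] by linarith
      hence "(w' s - L * w s) * exp (- L * s) \<le> 0" by (simp add: mult_nonpos_nonneg)
      thus ?thesis by (simp add: algebra_simps)
    qed
    ultimately show "\<exists>y. ((\<lambda>s. w s * exp (- L * s)) has_real_derivative y) (at s) \<and> y \<le> 0" by blast
  qed
  hence "w t * exp (- L * t) \<le> 0" using z by simp
  hence "w t \<le> 0" by (simp add: mult_le_0_iff)
  thus ?thesis using nn[of t] by linarith
next
  case False
  hence tl: "t \<le> 0" by simp
  have "(\<lambda>s. w s * exp (L * s)) t \<le> (\<lambda>s. w s * exp (L * s)) 0"
  proof (rule DERIV_nonneg_imp_nondecreasing[OF tl])
    fix s
    have "((\<lambda>s. w s * exp (L * s)) has_real_derivative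
        w' s * exp (L * s) + w s * (exp (L * s) * L)) (at s)"
      by (auto intro!: derivative_eq_intros d)
    moreover have "w' s * exp (L * s) + w s * (exp (L * s) * L) \<ge> 0"
    proof -
      have "w' s + L * w s \<ge> 0" using b[of s] by linarith
      hence "(w' s + L * w s) * exp (L * s) \<ge> 0" by simp
      thus ?thesis by (simp add: algebra_simps)
    qed
    ultimately show "\<exists>y. ((\<lambda>s. w s * exp (L * s)) has_real_derivative y) (at s) \<and> y \<ge> 0" by blast
  qed
  hence "w t * exp (L * t) \<le> 0" using z by simp
  hence "w t \<le> 0" by (simp add: mult_le_0_iff)
  thus ?thesis using nn[of t] by linarith
qed

lemma deriv_lbint:
  fixes f :: "real \<Rightarrow> real"
  assumes c: "continuous_on UNIV f"
  shows "((\<lambda>u. LBINT s=0..u. f s) has_real_derivative f t) (at t)"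
proof -
  let ?a = "min t 0 - 1" and ?b = "max t 0 + 1"
  have "((\<lambda>u. LBINT s=0..u. f s) has_vector_derivative f t) (at t within {?a..?b})"
    using interval_integral_FTC2[of ?a 0 ?b f t] continuous_on_subset[OF c, of "{?a..?b}"]
    by (simp add: zero_ereal_def)
  moreover have "t \<in> interior {?a..?b}" by auto
  ultimately have "((\<lambda>u. LBINT s=0..u. f s) has_vector_derivative f t) (at t)"
    using at_within_interior by metis
  thus ?thesis by (simp add: has_real_derivative_iff_has_vector_derivative)
qed


lemma sum7: "(\<Sum>j=1..(7::nat). f j) = f 1 + f 2 + f 3 + f 4 + f 5 + f 6 + (f 7::real)"
proof -
  have "{1..7::nat} = {1,2,3,4,5,6,7}" by auto
  thus ?thesis by (simp add: algebra_simps)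
qed
lemma sum3: "(\<Sum>j=1..(3::nat). f j) = f 1 + f 2 + (f 3::real)"
proof -
  have "{1..3::nat} = {1,2,3}" by auto
  thus ?thesis by (simp add: algebra_simps)
qed

lemma mv7:
  "matvec 7 (Umat e) v 1 = - v 2 + e * v 3 + (-10 * v 4 + (-1/3+e) * (v 5 + v 6 + v 7))"
  "matvec 7 (Umat e) v 2 = e * v 1 - v 3 + (-10 * v 4 + (-1/3+e) * (v 5 + v 6 + v 7))"
  "matvec 7 (Umat e) v 3 = - v 1 + e * v 2 + (-10 * v 4 + (-1/3+e) * (v 5 + v 6 + v 7))"
  unfolding matvec_def sum7 by (simp_all add: Umat_def algebra_simps)

lemma mv3:
  "matvec 3 (Ubar e) v 1 = - v 2 + e * v 3"
  "matvec 3 (Ubar e) v 2 = e * v 1 - v 3"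
  "matvec 3 (Ubar e) v 3 = - v 1 + e * v 2"
  unfolding matvec_def sum3 by (simp_all add: Ubar_def)

lemma dp3: "dotp 3 v w = v 1 * w 1 + v 2 * w 2 + v 3 * w 3"
  unfolding dotp_def sum3 by simp


lemma alg:
  fixes a1 a2 a3 c e P L :: real
  assumes L: "L = a1 + a2 + a3" "L \<noteq> 0"
  defines "A1 \<equiv> - a2 + e * a3 + c" and "A2 \<equiv> e * a1 - a3 + c" and "A3 \<equiv> - a1 + e * a2 + c"
  defines "b1 \<equiv> a1 / L" and "b2 \<equiv> a2 / L" and "b3 \<equiv> a3 / L"
  defines "M1 \<equiv> - b2 + e * b3" and "M2 \<equiv> e * b1 - b3" and "M3 \<equiv> - b1 + e * b2"
  defines "D \<equiv> a1*(A1-P)+a2*(A2-P)+a3*(A3-P)"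
  shows "((a1*(A1-P)) * L - a1 * D)/(L*L) = L * b1 * (M1 - (b1*M1+b2*M2+b3*M3))"
    "((a2*(A2-P)) * L - a2 * D)/(L*L) = L * b2 * (M2 - (b1*M1+b2*M2+b3*M3))"
    "((a3*(A3-P)) * L - a3 * D)/(L*L) = L * b3 * (M3 - (b1*M1+b2*M2+b3*M3))"
proof -
  have a3: "a3 = L - a1 - a2" using L by simp
  show "((a1*(A1-P)) * L - a1 * D)/(L*L) = L * b1 * (M1 - (b1*M1+b2*M2+b3*M3))"
    "((a2*(A2-P)) * L - a2 * D)/(L*L) = L * b2 * (M2 - (b1*M1+b2*M2+b3*M3))"
    "((a3*(A3-P)) * L - a3 * D)/(L*L) = L * b3 * (M3 - (b1*M1+b2*M2+b3*M3))"
  using L(2) unfolding a3  A1_def A2_def A3_def b1_def b2_def b3_def M1_def M2_def M3_def D_def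
  by (simp_all add: field_simps power2_eq_square)
qed


lemma prod_bound:
  fixes p q p' q' B C :: real
  assumes "\<bar>q\<bar> \<le> B" "\<bar>p'\<bar> \<le> C"
  shows "\<bar>p*q - p'*q'\<bar> \<le> \<bar>p-p'\<bar>*B + C*\<bar>q-q'\<bar>"
proof -
  have "p*q - p'*q' = (p-p')*q + p'*(q-q')" by (simp add: algebra_simps)
  hence "\<bar>p*q - p'*q'\<bar> \<le> \<bar>p-p'\<bar>*\<bar>q\<bar> + \<bar>p'\<bar>*\<bar>q-q'\<bar>"
    by (metis abs_mult abs_triangle_ineq)
  also have "\<dots> \<le> \<bar>p-p'\<bar>*B + C*\<bar>q-q'\<bar>"
    using assms by (intro add_mono mult_mono) auto
  finally show ?thesis .
qed

lemma lip_m: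
  fixes e u v u' v' :: real
  assumes "\<bar>e\<bar> \<le> 1"
  shows "\<bar>(- u + e * v) - (- u' + e * v')\<bar> \<le> \<bar>u - u'\<bar> + \<bar>v - v'\<bar>"
    "\<bar>(e * u - v) - (e * u' - v')\<bar> \<le> \<bar>u - u'\<bar> + \<bar>v - v'\<bar>"
proof -
  have h: "\<bar>e * (w - w')\<bar> \<le> \<bar>w - w'\<bar>" for w w' :: real
    using assms by (simp add: abs_mult mult_left_le_one_le)
  show "\<bar>(- u + e * v) - (- u' + e * v')\<bar> \<le> \<bar>u - u'\<bar> + \<bar>v - v'\<bar>"
    using h[of v v'] by (simp add: algebra_simps)
  show "\<bar>(e * u - v) - (e * u' - v')\<bar> \<le> \<bar>u - u'\<bar> + \<bar>v - v'\<bar>"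
    using h[of u u'] by (smt (verit) right_diff_distrib)
qed

lemma bnd_m:
  fixes e u v :: real
  assumes "\<bar>e\<bar> \<le> 1" "\<bar>u\<bar> \<le> 1" "\<bar>v\<bar> \<le> 1"
  shows "\<bar>- u + e * v\<bar> \<le> 2" "\<bar>e * u - v\<bar> \<le> 2"
proof -
  have "\<bar>e * v\<bar> \<le> 1" "\<bar>e * u\<bar> \<le> 1" using assms by (simp_all add: abs_mult mult_le_one)
  thus "\<bar>- u + e * v\<bar> \<le> 2" "\<bar>e * u - v\<bar> \<le> 2" using assms by linarith+
qed

lemma bnd_prod:
  fixes u m c :: real
  assumes "\<bar>u\<bar> \<le> 1" "\<bar>m\<bar> \<le> c"
  shows "\<bar>u * m\<bar> \<le> c"
proof -
  have "\<bar>u * m\<bar> = \<bar>u\<bar> * \<bar>m\<bar>" by (rule abs_mult)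
  also have "\<dots> \<le> 1 * \<bar>m\<bar>" using assms(1) by (intro mult_right_mono) auto
  finally show ?thesis using assms(2) by simp
qed

lemma tri4:
  fixes x y z w :: real
  shows "\<bar>(x - y) - (z - w)\<bar> \<le> \<bar>x - z\<bar> + \<bar>y - w\<bar>"
proof -
  have "(x - y) - (z - w) = (x - z) - (y - w)" by simp
  thus ?thesis using abs_triangle_ineq4[of "x - z" "y - w"] by simp
qed

lemma lin14:
  fixes P d Y q r D :: real
  shows "P \<le> d * 8 + 1 * Y \<Longrightarrow> Y \<le> q + r \<Longrightarrow> q \<le> D \<Longrightarrow> r \<le> 5 * D \<Longrightarrow> d \<le> D
    \<Longrightarrow> P \<le> 14 * D"
  by (smt (verit))

lemma lin5:
  fixes X p1 p2 p3 u1 u2 u3 m1 m2 m3 :: real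
  shows "X \<le> p1 + p2 + p3 \<Longrightarrow> p1 \<le> u1 * 2 + 1 * m1 \<Longrightarrow> p2 \<le> u2 * 2 + 1 * m2 \<Longrightarrow>
    p3 \<le> u3 * 2 + 1 * m3 \<Longrightarrow> m1 \<le> u1 + u2 + u3 \<Longrightarrow> m2 \<le> u1 + u2 + u3 \<Longrightarrow>
    m3 \<le> u1 + u2 + u3 \<Longrightarrow> X \<le> 5 * (u1 + u2 + u3)"
  by (smt (verit))

lemma lipF:
  fixes a1 a2 a3 b1 b2 b3 e :: real
  assumes e: "\<bar>e\<bar> \<le> 1"
    and a: "\<bar>a1\<bar> \<le> 1" "\<bar>a2\<bar> \<le> 1" "\<bar>a3\<bar> \<le> 1"
    and b: "\<bar>b1\<bar> \<le> 1" "\<bar>b2\<bar> \<le> 1" "\<bar>b3\<bar> \<le> 1"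
  defines "ma1 \<equiv> - a2 + e * a3" and "ma2 \<equiv> e * a1 - a3" and "ma3 \<equiv> - a1 + e * a2"
  defines "mb1 \<equiv> - b2 + e * b3" and "mb2 \<equiv> e * b1 - b3" and "mb3 \<equiv> - b1 + e * b2"
  defines "Qa \<equiv> a1 * ma1 + a2 * ma2 + a3 * ma3" and "Qb \<equiv> b1 * mb1 + b2 * mb2 + b3 * mb3"
  defines "D \<equiv> \<bar>a1 - b1\<bar> + \<bar>a2 - b2\<bar> + \<bar>a3 - b3\<bar>"
  shows "\<bar>a1 * (ma1 - Qa) - b1 * (mb1 - Qb)\<bar> \<le> 14 * D"
    "\<bar>a2 * (ma2 - Qa) - b2 * (mb2 - Qb)\<bar> \<le> 14 * D"
    "\<bar>a3 * (ma3 - Qa) - b3 * (mb3 - Qb)\<bar> \<le> 14 * D"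
proof -
  have dm: "\<bar>ma1 - mb1\<bar> \<le> D" "\<bar>ma2 - mb2\<bar> \<le> D" "\<bar>ma3 - mb3\<bar> \<le> D"
    using lip_m[OF e, of a2 a3 b2 b3] lip_m[OF e, of a1 a3 b1 b3] lip_m[OF e, of a1 a2 b1 b2]
    unfolding ma1_def ma2_def ma3_def mb1_def mb2_def mb3_def D_def by (smt (verit))+
  have bm: "\<bar>ma1\<bar> \<le> 2" "\<bar>ma2\<bar> \<le> 2" "\<bar>ma3\<bar> \<le> 2"
    "\<bar>mb1\<bar> \<le> 2" "\<bar>mb2\<bar> \<le> 2" "\<bar>mb3\<bar> \<le> 2"
    using bnd_m[OF e] a b unfolding ma1_def ma2_def ma3_def mb1_def mb2_def mb3_def by auto
  have p1: "\<bar>a1 * ma1 - b1 * mb1\<bar> \<le> \<bar>a1 - b1\<bar> * 2 + 1 * \<bar>ma1 - mb1\<bar>"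
    by (rule prod_bound) (use bm b in auto)
  have p2: "\<bar>a2 * ma2 - b2 * mb2\<bar> \<le> \<bar>a2 - b2\<bar> * 2 + 1 * \<bar>ma2 - mb2\<bar>"
    by (rule prod_bound) (use bm b in auto)
  have p3: "\<bar>a3 * ma3 - b3 * mb3\<bar> \<le> \<bar>a3 - b3\<bar> * 2 + 1 * \<bar>ma3 - mb3\<bar>"
    by (rule prod_bound) (use bm b in auto)
  have dQ: "\<bar>Qa - Qb\<bar> \<le> 5 * D"
  proof -
    have "Qa - Qb = (a1 * ma1 - b1 * mb1) + (a2 * ma2 - b2 * mb2) + (a3 * ma3 - b3 * mb3)"
      unfolding Qa_def Qb_def by simp
    hence "\<bar>Qa - Qb\<bar> \<le> \<bar>a1 * ma1 - b1 * mb1\<bar> + \<bar>a2 * ma2 - b2 * mb2\<bar> + \<bar>a3 * ma3 - b3 * mb3\<bar>"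
      using abs_triangle_ineq[of "(a1 * ma1 - b1 * mb1) + (a2 * ma2 - b2 * mb2)" "a3 * ma3 - b3 * mb3"]
        abs_triangle_ineq[of "a1 * ma1 - b1 * mb1" "a2 * ma2 - b2 * mb2"] by linarith
    thus ?thesis using p1 p2 p3 dm unfolding D_def by (rule lin5)
  qed
  have "\<bar>a1 * ma1\<bar> \<le> 2" "\<bar>a2 * ma2\<bar> \<le> 2" "\<bar>a3 * ma3\<bar> \<le> 2"
    using a bm by (simp_all add: bnd_prod)
  hence bQ: "\<bar>Qa\<bar> \<le> 6" unfolding Qa_def by linarith
  have bdm: "\<bar>ma1 - Qa\<bar> \<le> 8" "\<bar>ma2 - Qa\<bar> \<le> 8" "\<bar>ma3 - Qa\<bar> \<le> 8" using bQ bm by linarith+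
  have Dn: "0 \<le> D" unfolding D_def by simp
  have "\<bar>a1 * (ma1 - Qa) - b1 * (mb1 - Qb)\<bar> \<le> \<bar>a1 - b1\<bar> * 8 + 1 * \<bar>(ma1 - Qa) - (mb1 - Qb)\<bar>"
    by (rule prod_bound) (use bdm b in auto)
  thus "\<bar>a1 * (ma1 - Qa) - b1 * (mb1 - Qb)\<bar> \<le> 14 * D"
    by (rule lin14[OF _ tri4 dm(1) dQ]) (simp add: D_def)
  have "\<bar>a2 * (ma2 - Qa) - b2 * (mb2 - Qb)\<bar> \<le> \<bar>a2 - b2\<bar> * 8 + 1 * \<bar>(ma2 - Qa) - (mb2 - Qb)\<bar>"
    by (rule prod_bound) (use bdm b in auto)
  thus "\<bar>a2 * (ma2 - Qa) - b2 * (mb2 - Qb)\<bar> \<le> 14 * D"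
    by (rule lin14[OF _ tri4 dm(2) dQ]) (simp add: D_def)
  have "\<bar>a3 * (ma3 - Qa) - b3 * (mb3 - Qb)\<bar> \<le> \<bar>a3 - b3\<bar> * 8 + 1 * \<bar>(ma3 - Qa) - (mb3 - Qb)\<bar>"
    by (rule prod_bound) (use bdm b in auto)
  thus "\<bar>a3 * (ma3 - Qa) - b3 * (mb3 - Qb)\<bar> \<le> 14 * D"
    by (rule lin14[OF _ tri4 dm(3) dQ]) (simp add: D_def)
qed

lemma part1:
  assumes pos: "\<forall>i\<in>{1..7}. 0 < x t i" and rep: "replicator_solution 7 (Umat e) x"
    and i: "i \<in> {1..3}"
  shows "((\<lambda>s. xbar x s i) has_real_derivative
          lam x t * xbar x t i * (matvec 3 (Ubar e) (xbar x t) i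
             - dotp 3 (xbar x t) (matvec 3 (Ubar e) (xbar x t)))) (at t)"
proof -
  define P where "P = dotp 7 (x t) (matvec 7 (Umat e) (x t))"
  define A where "A = matvec 7 (Umat e) (x t)"
  have d: "\<And>j. j \<in> {1..7} \<Longrightarrow> ((\<lambda>s. x s j) has_real_derivative x t j * (A j - P)) (at t)"
    using rep unfolding replicator_solution_def A_def P_def by blast
  define D where "D = x t 1 * (A 1 - P) + x t 2 * (A 2 - P) + x t 3 * (A 3 - P)"
  have dl: "((\<lambda>s. lam x s) has_real_derivative D) (at t)"
    unfolding lam_def D_def by (intro DERIV_add d) auto
  have "0 < x t 1" "0 < x t 2" "0 < x t 3" using pos by auto
  hence L: "lam x t \<noteq> 0" unfolding lam_def by linarith
  have dq: "((\<lambda>s. x s i / lam x s) has_real_derivative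
      (x t i * (A i - P) * lam x t - x t i * D) / (lam x t * lam x t)) (at t)"
    by (rule DERIV_divide[OF d dl L]) (use i in auto)
  define c where "c = -10 * x t 4 + (-1/3+e) * (x t 5 + x t 6 + x t 7)"
  have A: "A 1 = - x t 2 + e * x t 3 + c" "A 2 = e * x t 1 - x t 3 + c" "A 3 = - x t 1 + e * x t 2 + c"
    unfolding A_def c_def mv7 by simp_all
  have xb: "\<And>j. xbar x t j = x t j / lam x t" unfolding xbar_def by simp
  have e: "(x t i * (A i - P) * lam x t - x t i * D) / (lam x t * lam x t) =
     lam x t * xbar x t i * (matvec 3 (Ubar e) (xbar x t) i
             - dotp 3 (xbar x t) (matvec 3 (Ubar e) (xbar x t)))"
  proof -
    have L2: "lam x t = x t 1 + x t 2 + x t 3" unfolding lam_def ..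
    have "i = 1 \<or> i = 2 \<or> i = 3" using i by auto
    moreover have ?thesis if "i = 1" unfolding that mv3 dp3 xb D_def A
      by (rule alg(1)[OF L2 L])
    moreover have ?thesis if "i = 2" unfolding that mv3 dp3 xb D_def A
      by (rule alg(2)[OF L2 L])
    moreover have ?thesis if "i = 3" unfolding that mv3 dp3 xb D_def A
      by (rule alg(3)[OF L2 L])
    ultimately show ?thesis by blast
  qed
  show ?thesis using dq unfolding e xbar_def .
qed

definition RF :: "real \<Rightarrow> (nat \<Rightarrow> real) \<Rightarrow> nat \<Rightarrow> real" where
  "RF e v i = v i * (matvec 3 (Ubar e) v i - dotp 3 v (matvec 3 (Ubar e) v))"

lemma RF_lip:
  assumes e: "\<bar>e\<bar> \<le> 1" and v: "\<And>j. j \<in> {1..3} \<Longrightarrow> \<bar>v j\<bar> \<le> 1"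
    and u: "\<And>j. j \<in> {1..3} \<Longrightarrow> \<bar>u j\<bar> \<le> 1" and i: "i \<in> {1..3}"
  shows "\<bar>RF e v i - RF e u i\<bar> \<le> 14 * (\<bar>v 1 - u 1\<bar> + \<bar>v 2 - u 2\<bar> + \<bar>v 3 - u 3\<bar>)"
proof -
  note L = lipF[OF e v[of 1] v[of 2] v[of 3] u[of 1] u[of 2] u[of 3]]
  have "i = 1 \<or> i = 2 \<or> i = 3" using i by auto
  moreover have ?thesis if "i = 1" unfolding that RF_def mv3 dp3 using L(1) by simp
  moreover have ?thesis if "i = 2" unfolding that RF_def mv3 dp3 using L(2) by simp
  moreover have ?thesis if "i = 3" unfolding that RF_def mv3 dp3 using L(3) by simp
  ultimately show ?thesis by blast
qed

lemma wbound:
  fixes d1 d2 d3 f1 f2 f3 l :: real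
  assumes l: "0 < l" "l \<le> 1"
    and f: "\<bar>f1\<bar> \<le> 14 * (\<bar>d1\<bar> + \<bar>d2\<bar> + \<bar>d3\<bar>)" "\<bar>f2\<bar> \<le> 14 * (\<bar>d1\<bar> + \<bar>d2\<bar> + \<bar>d3\<bar>)"
      "\<bar>f3\<bar> \<le> 14 * (\<bar>d1\<bar> + \<bar>d2\<bar> + \<bar>d3\<bar>)"
  shows "\<bar>(l*f1)*d1 + d1*(l*f1) + ((l*f2)*d2 + d2*(l*f2)) + ((l*f3)*d3 + d3*(l*f3))\<bar>
     \<le> 84 * (d1*d1 + d2*d2 + d3*d3)"
proof -
  define S where "S = \<bar>d1\<bar> + \<bar>d2\<bar> + \<bar>d3\<bar>"
  have S0: "0 \<le> S" unfolding S_def by simp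
  have t: "\<bar>(l*f)*d + d*(l*f)\<bar> \<le> 28 * \<bar>d\<bar> * S" if hf: "\<bar>f\<bar> \<le> 14 * S" for f d
  proof -
    have "\<bar>(l*f)*d + d*(l*f)\<bar> = 2 * l * (\<bar>f\<bar> * \<bar>d\<bar>)" using l by (simp add: abs_mult)
    also have "\<dots> \<le> 2 * 1 * (\<bar>f\<bar> * \<bar>d\<bar>)" using l by (intro mult_right_mono) auto
    also have "\<dots> \<le> 2 * 1 * ((14 * S) * \<bar>d\<bar>)" using hf by (intro mult_left_mono mult_right_mono) auto
    finally show ?thesis by (simp add: algebra_simps)
  qed
  have "\<bar>(l*f1)*d1 + d1*(l*f1) + ((l*f2)*d2 + d2*(l*f2)) + ((l*f3)*d3 + d3*(l*f3))\<bar>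
      \<le> \<bar>(l*f1)*d1 + d1*(l*f1)\<bar> + \<bar>(l*f2)*d2 + d2*(l*f2)\<bar> + \<bar>(l*f3)*d3 + d3*(l*f3)\<bar>"
    by (rule order_trans[OF abs_triangle_ineq]) (simp add: abs_triangle_ineq)
  also have "\<dots> \<le> 28 * \<bar>d1\<bar> * S + 28 * \<bar>d2\<bar> * S + 28 * \<bar>d3\<bar> * S"
    using t[of f1 d1] t[of f2 d2] t[of f3 d3] f unfolding S_def[symmetric] by (intro add_mono)
  also have "\<dots> = 28 * (S * S)" unfolding S_def by (simp add: algebra_simps)
  also have "\<dots> \<le> 84 * (d1*d1 + d2*d2 + d3*d3)"
  proof -
    have sq: "\<bar>d\<bar> * \<bar>d\<bar> = d * d" for d :: real by (simp add: abs_mult[symmetric])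
    have "0 \<le> (\<bar>d1\<bar> - \<bar>d2\<bar>)^2 + (\<bar>d2\<bar> - \<bar>d3\<bar>)^2 + (\<bar>d1\<bar> - \<bar>d3\<bar>)^2" by simp
    hence "S * S \<le> 3 * (\<bar>d1\<bar> * \<bar>d1\<bar> + \<bar>d2\<bar> * \<bar>d2\<bar> + \<bar>d3\<bar> * \<bar>d3\<bar>)"
      unfolding S_def by (simp add: power2_eq_square algebra_simps)
    thus ?thesis unfolding sq by simp
  qed
  finally show ?thesis .
qed


theorem lemma3:
  shows "\<exists>e0>0. \<forall>e. 0 < e \<and> e < e0 \<longrightarrow>
    (\<forall>(x :: real \<Rightarrow> nat \<Rightarrow> real) (y :: real \<Rightarrow> nat \<Rightarrow> real).
      (\<forall>t. in_simplex 7 (x t) \<and> (\<forall>i\<in>{1..7}. 0 < x t i)) \<and>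
      replicator_solution 7 (Umat e) x \<and>
      (\<forall>t. in_simplex 3 (y t)) \<and>
      replicator_solution 3 (Ubar e) y \<and>
      (\<forall>i\<in>{1..3}. y 0 i = xbar x 0 i)
      \<longrightarrow>
      (\<forall>t. \<forall>i\<in>{1..3}. ((\<lambda>s. xbar x s i) has_real_derivative
          lam x t * xbar x t i * (matvec 3 (Ubar e) (xbar x t) i
             - dotp 3 (xbar x t) (matvec 3 (Ubar e) (xbar x t)))) (at t)) \<and>
      (\<forall>t. \<forall>i\<in>{1..3}. xbar x t i = y (taubar x t) i))"
proof (rule exI[of _ "1::real"], rule conjI, simp, intro allI impI)
  fix e :: real and x y :: "real \<Rightarrow> nat \<Rightarrow> real"
  assume e: "0 < e \<and> e < 1"
  assume H: "(\<forall>t. in_simplex 7 (x t) \<and> (\<forall>i\<in>{1..7}. 0 < x t i)) \<and>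
      replicator_solution 7 (Umat e) x \<and>
      (\<forall>t. in_simplex 3 (y t)) \<and>
      replicator_solution 3 (Ubar e) y \<and>
      (\<forall>i\<in>{1..3}. y 0 i = xbar x 0 i)"
  have xs: "\<And>t. in_simplex 7 (x t)" and xp: "\<And>t i. i \<in> {1..7} \<Longrightarrow> 0 < x t i"
    and repx: "replicator_solution 7 (Umat e) x" and ys: "\<And>t. in_simplex 3 (y t)"
    and repy: "replicator_solution 3 (Ubar e) y" and y0: "\<And>i. i\<in>{1..3} \<Longrightarrow> y 0 i = xbar x 0 i"
    using H by auto
  have P1: "\<And>t i. i \<in> {1..3} \<Longrightarrow> ((\<lambda>s. xbar x s i) has_real_derivative
          lam x t * xbar x t i * (matvec 3 (Ubar e) (xbar x t) i
             - dotp 3 (xbar x t) (matvec 3 (Ubar e) (xbar x t)))) (at t)"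
    by (rule part1) (use xp repx in auto)
  have C1: "\<forall>t. \<forall>i\<in>{1..3}. ((\<lambda>s. xbar x s i) has_real_derivative
          lam x t * xbar x t i * (matvec 3 (Ubar e) (xbar x t) i
             - dotp 3 (xbar x t) (matvec 3 (Ubar e) (xbar x t)))) (at t)" using P1 by blast
  have pos3: "\<And>t. 0 < x t 1 \<and> 0 < x t 2 \<and> 0 < x t 3" using xp by auto
  have lpos: "\<And>t. 0 < lam x t" using pos3 unfolding lam_def by (smt (verit))
  have lle: "lam x t \<le> 1" for t
  proof -
    have "x t 1 + x t 2 + x t 3 + x t 4 + x t 5 + x t 6 + x t 7 = 1"
      using xs[of t] unfolding in_simplex_def sum7 by simp
    moreover have "0 < x t 4" "0 < x t 5" "0 < x t 6" "0 < x t 7" using xp by auto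
    ultimately show ?thesis unfolding lam_def by linarith
  qed
  have abnd: "\<bar>xbar x t j\<bar> \<le> 1" if "j \<in> {1..3}" for t j
  proof -
    have "j = 1 \<or> j = 2 \<or> j = 3" using that by auto
    hence "0 < x t j \<and> x t j \<le> lam x t" using pos3[of t] unfolding lam_def by auto
    thus ?thesis unfolding xbar_def using lpos[of t] by simp
  qed
  have ybnd: "\<bar>y s j\<bar> \<le> 1" if "j \<in> {1..3}" for s j
  proof -
    have "y s 1 + y s 2 + y s 3 = 1" "0 \<le> y s 1" "0 \<le> y s 2" "0 \<le> y s 3"
      using ys[of s] unfolding in_simplex_def sum3 by auto
    moreover have "j = 1 \<or> j = 2 \<or> j = 3" using that by auto
    ultimately show ?thesis by auto
  qed
  have contl: "continuous_on UNIV (lam x)"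
  proof (rule continuous_at_imp_continuous_on, intro ballI)
    fix t :: real
    have d: "\<And>j. j \<in> {1..7} \<Longrightarrow> isCont (\<lambda>s. x s j) t"
      using repx unfolding replicator_solution_def by (blast intro: DERIV_isCont)
    have "isCont (\<lambda>s. x s 1 + x s 2 + x s 3) t"
      by (intro continuous_intros d) auto
    thus "isCont (lam x) t" unfolding lam_def[abs_def] .
  qed
  have dtau: "\<And>t. (taubar x has_real_derivative lam x t) (at t)"
    unfolding taubar_def[abs_def] by (rule deriv_lbint[OF contl])
  have da: "((\<lambda>s. xbar x s j) has_real_derivative lam x t * RF e (xbar x t) j) (at t)"
    if "j \<in> {1..3}" for t j
    using P1[OF that, of t] unfolding RF_def by (simp add: mult.assoc)
  have dz: "((\<lambda>s. y (taubar x s) j) has_real_derivative RF e (y (taubar x t)) j * lam x t) (at t)"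
    if "j \<in> {1..3}" for t j
  proof -
    have "((\<lambda>s. y s j) has_real_derivative RF e (y (taubar x t)) j) (at (taubar x t))"
      using repy that unfolding replicator_solution_def RF_def by blast
    from DERIV_chain2[OF this dtau] show ?thesis .
  qed
  define d where "d t j = xbar x t j - y (taubar x t) j" for t j
  define w where "w t = d t 1 * d t 1 + d t 2 * d t 2 + d t 3 * d t 3" for t
  define Df where "Df t j = RF e (xbar x t) j - RF e (y (taubar x t)) j" for t j
  define w' where "w' t = (lam x t * Df t 1) * d t 1 + d t 1 * (lam x t * Df t 1)
     + ((lam x t * Df t 2) * d t 2 + d t 2 * (lam x t * Df t 2))
     + ((lam x t * Df t 3) * d t 3 + d t 3 * (lam x t * Df t 3))" for t
  have dd: "((\<lambda>s. d s j) has_real_derivative lam x t * Df t j) (at t)" if "j \<in> {1..3}" for t j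
  proof -
    have "((\<lambda>s. xbar x s j - y (taubar x s) j) has_real_derivative
        lam x t * RF e (xbar x t) j - RF e (y (taubar x t)) j * lam x t) (at t)"
      by (rule DERIV_diff[OF da[OF that] dz[OF that]])
    thus ?thesis unfolding d_def[abs_def] Df_def by (simp add: algebra_simps)
  qed
  have dw: "(w has_real_derivative w' t) (at t)" for t
  proof -
    have m: "((\<lambda>s. d s j * d s j) has_real_derivative
       (lam x t * Df t j) * d t j + d t j * (lam x t * Df t j)) (at t)" if "j \<in> {1..3}" for j
      by (rule DERIV_cong[OF DERIV_mult[OF dd[OF that] dd[OF that]]]) (simp add: algebra_simps)
    have "((\<lambda>s. d s 1 * d s 1 + d s 2 * d s 2 + d s 3 * d s 3) has_real_derivative w' t) (at t)"
      unfolding w'_def by (rule DERIV_add[OF DERIV_add]) (rule m; simp)+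
    thus ?thesis unfolding w_def[abs_def] .
  qed
  have bw: "\<bar>w' t\<bar> \<le> 84 * w t" for t
    unfolding w'_def w_def
  proof (rule wbound[OF lpos lle])
    have ab: "\<And>j. j \<in> {1..3} \<Longrightarrow> \<bar>xbar x t j\<bar> \<le> 1" by (rule abnd)
    have yb: "\<And>j. j \<in> {1..3} \<Longrightarrow> \<bar>y (taubar x t) j\<bar> \<le> 1" by (rule ybnd)
    have ee: "\<bar>e\<bar> \<le> 1" using e by simp
    note R = RF_lip[OF ee ab yb]
    show "\<bar>Df t 1\<bar> \<le> 14 * (\<bar>d t 1\<bar> + \<bar>d t 2\<bar> + \<bar>d t 3\<bar>)"
      "\<bar>Df t 2\<bar> \<le> 14 * (\<bar>d t 1\<bar> + \<bar>d t 2\<bar> + \<bar>d t 3\<bar>)"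
      "\<bar>Df t 3\<bar> \<le> 14 * (\<bar>d t 1\<bar> + \<bar>d t 2\<bar> + \<bar>d t 3\<bar>)"
      unfolding Df_def d_def using R[where i="1::nat"] R[where i="2::nat"] R[where i="3::nat"] by auto
  qed
  have wn: "0 \<le> w t" for t unfolding w_def by simp
  have tau0: "taubar x 0 = 0" unfolding taubar_def by (simp add: zero_ereal_def)
  have w0: "w 0 = 0" unfolding w_def d_def tau0 using y0 by simp
  have w_zero: "w t = 0" for t by (rule gronwall_zero[OF dw bw wn w0])
  have C2: "\<forall>t. \<forall>i\<in>{1..3}. xbar x t i = y (taubar x t) i"
  proof (intro allI ballI)
    fix t i assume i: "i \<in> {1..(3::nat)}"
    have "d t 1 = 0 \<and> d t 2 = 0 \<and> d t 3 = 0"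
      using w_zero[of t] unfolding w_def
      using zero_le_square[of "d t 1"] zero_le_square[of "d t 2"] zero_le_square[of "d t 3"]
      by (smt (verit) mult_eq_0_iff)
    moreover have "i = 1 \<or> i = 2 \<or> i = 3" using i by auto
    ultimately show "xbar x t i = y (taubar x t) i" unfolding d_def by auto
  qed
  show "(\<forall>t. \<forall>i\<in>{1..3}. ((\<lambda>s. xbar x s i) has_real_derivative
          lam x t * xbar x t i * (matvec 3 (Ubar e) (xbar x t) i
             - dotp 3 (xbar x t) (matvec 3 (Ubar e) (xbar x t)))) (at t)) \<and>
      (\<forall>t. \<forall>i\<in>{1..3}. xbar x t i = y (taubar x t) i)" using C1 C2 by (rule conjI)
qed

end
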